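(* For real hopping amplitudes $s,t$ with $|s|\neq |t|$, and arbitrary real interface hopping amplitudes $u_L,u_R$, the SSH interface Hamiltonian $H_{\rm SSH}$ has a bulk spectral gap (around $0$) and an odd number of zero modes, i.e. $\dim\ker H_{\rm SSH}$ is odd.
   Context: Pauli matrices $\sigma_1=\begin{pmatrix}0&1\\1&0\end{pmatrix}$, $\sigma_3=\begin{pmatrix}1&0\\0&-1\end{pmatrix}$. Consider the Hilbert space $\ell^2(-\mathbf{N};\mathbf{C}^2)\oplus\mathbf{C}\oplus\ell^2(\mathbf{N};\mathbf{C}^2)$, with sequences $\psi=(\psi_n)$, $\psi_n\in\mathbf{C}^2$ for $n\neq 0$ and $\psi_0\in\mathbf{C}$. The interface Hamiltonian $H_{\rm int}(A_L,V_L,A_R,V_R;B_L,B_R,W)$ acts as $(H_{\rm int}\psi)_n=A_R^*\psi_{n-1}+A_R\psi_{n+1}+V_R\psi_n$ for $n\geq 2$; $=B_R^*\psi_0+A_R\psi_2+V_R\psi_1$ for $n=1$; $=B_L^*\psi_{-1}+B_R\psi_1+W\psi_0$ for $n=0$; $=A_L^*\psi_{-2}+B_L\psi_0+V_L\psi_{-1}$ for $n=-1$; $=A_L^*\psi_{n-1}+A_L\psi_{n+1}+V_L\psi_n$ for $n\leq -2$, where $A_L,A_R,V_L,V_R$ are $2\times2$ matrices, $B_L^*,B_R$ are $1\times 2$ matrices and $W\in\mathbf{R}$. The SSH model Hamiltonian is $H_{\rm SSH}=H_{\rm int}(A,V,A,V;B_L,B_R,0)$ with $V=s\sigma_1$,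 $A=\begin{pmatrix}0&0\\t&0\end{pmatrix}$, $B_R=(u_R\;\;0)$, $B_L^*=(0\;\;u_L)$, $s,t,u_L,u_R\in\mathbf{R}$. It is chiral symmetric with respect to a sublattice grading (on each side the two components of $\mathbf{C}^2$ are the two sublattices, arranged so that the left side is the mirror image of the right, and the $n=0$ site belongs to one sublattice), i.e. $H_{\rm SSH}$ anticommutes with this grading. *)

theory Defs
  imports "HOL-Analysis.Analysis" "HOL-Library.Function_Algebras"
begin

definition adjM :: "complex^2^2 \<Rightarrow> complex^2^2" where
  "adjM M = (\<chi> i j. cnj (M $ j $ i))"

definition sigma1 :: "complex^2^2" where
  "sigma1 = vector [vector [0, 1], vector [1, 0]]"

definition sigma3 :: "complex^2^2" where
  "sigma3 = vector [vector [1, 0], vector [0, -1]]"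

text \<open>States of the interface Hilbert space l2(-N;C^2) + C + l2(N;C^2):
  a pair (f, c) with f :: int => C^2 (the entries f n for n \<noteq> 0) and c = psi_0 \<in> C.
  By convention f 0 = 0 (the slot 0 of f is unused).\<close>

type_synonym istate = "(int \<Rightarrow> complex^2) \<times> complex"

definition sq_summable :: "(int \<Rightarrow> complex^2) \<Rightarrow> bool" where
  "sq_summable f \<longleftrightarrow> (\<lambda>n. (norm (f n))\<^sup>2) summable_on UNIV"

definition l2Z :: "(int \<Rightarrow> complex^2) set" where
  "l2Z = {f. sq_summable f}"

definition l2norm :: "(int \<Rightarrow> complex^2) \<Rightarrow> real" where
  "l2norm f = sqrt (\<Sum>\<^sub>\<infinity>n. (norm (f n))\<^sup>2)"

definition intSpace :: "istate set" where
  "intSpace = {(f, c). f 0 = 0 \<and> sq_summable f}"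

definition scaleI :: "complex \<Rightarrow> istate \<Rightarrow> istate" where
  "scaleI a x = ((\<lambda>n. a *s fst x n), a * snd x)"

text \<open>The 1x2 matrix B_R is represented by bR with B_R v = bR$1 * v$1 + bR$2 * v$2, hence
  B_R^* c = c * conj(bR). The 1x2 matrix B_L^* is represented by bLs with
  B_L^* v = bLs$1 * v$1 + bLs$2 * v$2, hence B_L c = c * conj(bLs).\<close>

definition rowmul :: "complex^2 \<Rightarrow> complex^2 \<Rightarrow> complex" where
  "rowmul b v = b$1 * v$1 + b$2 * v$2"

definition colmul :: "complex^2 \<Rightarrow> complex \<Rightarrow> complex^2" where
  "colmul b c = (\<chi> i. c * cnj (b$i))"

definition Hint ::
  "complex^2^2 \<Rightarrow> complex^2^2 \<Rightarrow> complex^2^2 \<Rightarrow> complex^2^2 \<Rightarrow>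
   complex^2 \<Rightarrow> complex^2 \<Rightarrow> real \<Rightarrow> istate \<Rightarrow> istate" where
  "Hint A_L V_L A_R V_R bLs bR W x =
    (let f = fst x; c = snd x in
     ((\<lambda>n. if n \<ge> 2 then adjM A_R *v f (n - 1) + A_R *v f (n + 1) + V_R *v f n
           else if n = 1 then colmul bR c + A_R *v f 2 + V_R *v f 1
           else if n = -1 then adjM A_L *v f (-2) + colmul bLs c + V_L *v f (-1)
           else if n \<le> -2 then adjM A_L *v f (n - 1) + A_L *v f (n + 1) + V_L *v f n
           else 0),
      rowmul bLs (f (-1)) + rowmul bR (f 1) + complex_of_real W * c))"

definition ssh_A :: "real \<Rightarrow> complex^2^2" where
  "ssh_A t = vector [vector [0, 0], vector [complex_of_real t, 0]]"

definition ssh_V :: "real \<Rightarrow> complex^2^2" where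
  "ssh_V s = (\<chi> i j. complex_of_real s * sigma1 $ i $ j)"

definition H_SSH :: "real \<Rightarrow> real \<Rightarrow> real \<Rightarrow> real \<Rightarrow> istate \<Rightarrow> istate" where
  "H_SSH s t uL uR = Hint (ssh_A t) (ssh_V s) (ssh_A t) (ssh_V s)
      (vector [0, complex_of_real uL]) (vector [complex_of_real uR, 0]) 0"

definition kerI :: "(istate \<Rightarrow> istate) \<Rightarrow> istate set" where
  "kerI H = {x \<in> intSpace. H x = ((\<lambda>_. 0), 0)}"

definition cdimI :: "istate set \<Rightarrow> nat" where
  "cdimI S = vector_space.dim scaleI S"

definition Hbulk :: "complex^2^2 \<Rightarrow> complex^2^2 \<Rightarrow> (int \<Rightarrow> complex^2) \<Rightarrow> (int \<Rightarrow> complex^2)" where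
  "Hbulk A V f = (\<lambda>n. adjM A *v f (n - 1) + A *v f (n + 1) + V *v f n)"

definition in_resolvent_l2 :: "((int \<Rightarrow> complex^2) \<Rightarrow> (int \<Rightarrow> complex^2)) \<Rightarrow> complex \<Rightarrow> bool" where
  "in_resolvent_l2 T lam \<longleftrightarrow>
     bij_betw (\<lambda>f n. T f n - lam *s f n) l2Z l2Z \<and>
     (\<exists>C. \<forall>f\<in>l2Z. l2norm f \<le> C * l2norm (\<lambda>n. T f n - lam *s f n))"

definition spectrum_l2 :: "((int \<Rightarrow> complex^2) \<Rightarrow> (int \<Rightarrow> complex^2)) \<Rightarrow> complex set" where
  "spectrum_l2 T = {lam. \<not> in_resolvent_l2 T lam}"

definition bulk_gap :: "complex^2^2 \<Rightarrow> complex^2^2 \<Rightarrow> bool" where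
  "bulk_gap A V \<longleftrightarrow> (\<exists>\<delta>>0. \<forall>e::real. \<bar>e\<bar> < \<delta> \<longrightarrow> complex_of_real e \<notin> spectrum_l2 (Hbulk A V))"

end

theory Submission
  imports Defs
begin

definition NN :: "(int \<Rightarrow> 'a::real_normed_vector) \<Rightarrow> real" where
  "NN x = sqrt (infsum (\<lambda>n. (norm (x n))\<^sup>2) UNIV)"
definition SQ :: "(int \<Rightarrow> 'a::real_normed_vector) \<Rightarrow> bool" where
  "SQ x \<longleftrightarrow> (\<lambda>n. (norm (x n))\<^sup>2) summable_on UNIV"

lemma K1:
  assumes "SQ x" shows "L2_set (\<lambda>n. norm (x n)) F \<le> NN x"
proof (cases "finite F")
  case True
  have "(\<Sum>n\<in>F. (norm (x n))\<^sup>2) \<le> infsum (\<lambda>n. (norm (x n))\<^sup>2) UNIV"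
    using assms True unfolding SQ_def by (intro finite_sum_le_infsum) auto
  then show ?thesis unfolding L2_set_def NN_def by (rule real_sqrt_le_mono)
next
  case False
  then show ?thesis by (simp add: NN_def infsum_nonneg)
qed

lemma K2:
  assumes "\<And>F. finite F \<Longrightarrow> L2_set (\<lambda>n. norm (x n)) F \<le> B"
  shows "SQ x \<and> NN x \<le> B"
proof -
  have B0: "0 \<le> B" using assms[of "{}"] by simp
  have fs: "(\<Sum>n\<in>F. (norm (x n))\<^sup>2) \<le> B\<^sup>2" if "finite F" for F
  proof -
    have "(\<Sum>n\<in>F. (norm (x n))\<^sup>2) = (L2_set (\<lambda>n. norm (x n)) F)\<^sup>2"
      unfolding L2_set_def by (simp add: sum_nonneg)
    also have "\<dots> \<le> B\<^sup>2" using assms[OF that] by (simp add: power_mono)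
    finally show ?thesis .
  qed
  have s: "SQ x" unfolding SQ_def
    by (rule nonneg_bdd_above_summable_on) (use fs in \<open>auto simp: bdd_above_def\<close>)
  have "infsum (\<lambda>n. (norm (x n))\<^sup>2) UNIV \<le> B\<^sup>2"
    using s unfolding SQ_def by (rule infsum_le_finite_sums) (use fs in auto)
  then have "NN x \<le> sqrt (B\<^sup>2)" unfolding NN_def by (rule real_sqrt_le_mono)
  with B0 s show ?thesis by simp
qed

lemma NN_nonneg: "0 \<le> NN x" by (simp add: NN_def infsum_nonneg)

lemma pt_le: "SQ x \<Longrightarrow> norm (x n) \<le> NN x"
  using K1[of x "{n}"] by simp

lemma NN_add:
  assumes "SQ x" "SQ y"
  shows "SQ (\<lambda>n. x n + y n) \<and> NN (\<lambda>n. x n + y n) \<le> NN x + NN y"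
proof (rule K2)
  fix F :: "int set" assume "finite F"
  have "L2_set (\<lambda>n. norm (x n + y n)) F \<le> L2_set (\<lambda>n. norm (x n) + norm (y n)) F"
    by (rule L2_set_mono) (auto intro: norm_triangle_ineq)
  also have "\<dots> \<le> L2_set (\<lambda>n. norm (x n)) F + L2_set (\<lambda>n. norm (y n)) F"
    by (rule L2_set_triangle_ineq)
  also have "\<dots> \<le> NN x + NN y" using K1[OF assms(1)] K1[OF assms(2)] by (intro add_mono)
  finally show "L2_set (\<lambda>n. norm (x n + y n)) F \<le> NN x + NN y" .
qed

lemma NN_scale:
  fixes x :: "int \<Rightarrow> complex"
  assumes "SQ x"
  shows "SQ (\<lambda>n. c * x n) \<and> NN (\<lambda>n. c * x n) = cmod c * NN x"
proof
  have e: "(\<lambda>n. (norm (c * x n))\<^sup>2) = (\<lambda>n. (cmod c)\<^sup>2 * (norm (x n))\<^sup>2)"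
    by (simp add: norm_mult power_mult_distrib)
  show "SQ (\<lambda>n. c * x n)" using assms unfolding SQ_def e by (intro summable_on_cmult_right)
  have "NN (\<lambda>n. c * x n) = sqrt ((cmod c)\<^sup>2 * infsum (\<lambda>n. (norm (x n))\<^sup>2) UNIV)"
    unfolding NN_def e using assms unfolding SQ_def by (subst infsum_cmult_right) auto
  then show "NN (\<lambda>n. c * x n) = cmod c * NN x" by (simp add: NN_def real_sqrt_mult)
qed

lemma NN_shift:
  fixes x :: "int \<Rightarrow> 'a::real_normed_vector"
  shows "SQ (\<lambda>n. x (n - d)) = SQ x \<and> NN (\<lambda>n. x (n - d)) = NN x"
proof -
  have b: "bij_betw (\<lambda>n. n - d) UNIV UNIV"
    by (rule bij_betwI[where g="\<lambda>n. n + d"]) auto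
  show ?thesis unfolding SQ_def NN_def
    using summable_on_reindex_bij_betw[OF b, of "\<lambda>n. (norm (x n))\<^sup>2"]
      infsum_reindex_bij_betw[OF b, of "\<lambda>n. (norm (x n))\<^sup>2"] by simp
qed

lemma NN_zero_pt: "SQ x \<Longrightarrow> NN x \<le> 0 \<Longrightarrow> x n = 0"
  using pt_le[of x n] by (metis norm_le_zero_iff order_trans)

lemma SQ_zero: "SQ (\<lambda>n. 0::'a::real_normed_vector) \<and> NN (\<lambda>n. 0::'a) \<le> 0"
  by (rule K2) (simp add: L2_set_0')

lemma GEO:
  fixes y :: "int \<Rightarrow> complex" and \<beta> :: real and d :: int
  assumes b: "\<bar>\<beta>\<bar> < 1" and y: "SQ y"
  shows "\<exists>x::int\<Rightarrow>complex. SQ x \<and> (\<forall>n. x n - complex_of_real \<beta> * x (n - d) = y n)"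
proof -
  define g where "g n k = complex_of_real (\<beta>^k) * y (n - d * int k)" for n k
  have gs: "summable (\<lambda>k. \<bar>\<beta>\<bar>^k * NN y)"
    by (rule summable_mult2) (use b in \<open>simp add: summable_geometric\<close>)
  have sm: "summable (g n)" for n
  proof (rule summable_comparison_test[OF _ gs])
    show "\<exists>N. \<forall>k\<ge>N. norm (g n k) \<le> \<bar>\<beta>\<bar>^k * NN y"
      using pt_le[OF y] by (intro exI[of _ 0] allI impI) (simp add: g_def norm_mult norm_power mult_left_mono)
  qed
  define x where "x n = suminf (g n)" for n
  have rec: "x n - \<beta> * x (n - d) = y n" for n
  proof -
    have "(\<Sum>k. g n (Suc k)) = x n - g n 0" unfolding x_def by (rule suminf_split_head[OF sm])
    moreover have "(\<lambda>k. g n (Suc k)) = (\<lambda>k. \<beta> * g (n - d) k)"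
      by (auto simp: g_def algebra_simps)
    moreover have "(\<Sum>k. \<beta> * g (n - d) k) = \<beta> * x (n - d)"
      unfolding x_def by (rule suminf_mult[OF sm])
    ultimately show ?thesis by (simp add: g_def)
  qed
  define xK where "xK K n = (\<Sum>k<K. g n k)" for K n
  have ind: "SQ (xK K) \<and> NN (xK K) \<le> (\<Sum>k<K. \<bar>\<beta>\<bar>^k) * NN y" for K
  proof (induction K)
    case 0
    then show ?case using SQ_zero by (simp add: xK_def)
  next
    case (Suc K)
    have e: "xK (Suc K) = (\<lambda>n. xK K n + complex_of_real (\<beta>^K) * y (n - d * int K))"
      by (auto simp: xK_def g_def)
    have sh: "SQ (\<lambda>n. y (n - d * int K)) \<and> NN (\<lambda>n. y (n - d * int K)) = NN y"
      using NN_shift[of y "d * int K"] y by simp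
    have sc: "SQ (\<lambda>n. complex_of_real (\<beta>^K) * y (n - d * int K)) \<and>
        NN (\<lambda>n. complex_of_real (\<beta>^K) * y (n - d * int K)) = \<bar>\<beta>\<bar>^K * NN y"
      using NN_scale[of "\<lambda>n. y (n - d * int K)" "complex_of_real (\<beta>^K)"] sh
      by (simp add: norm_power)
    have a: "SQ (xK (Suc K)) \<and> NN (xK (Suc K)) \<le> NN (xK K) + \<bar>\<beta>\<bar>^K * NN y"
      unfolding e using NN_add[of "xK K" "\<lambda>n. complex_of_real (\<beta>^K) * y (n - d * int K)"] Suc sc
      by auto
    then show ?case using Suc by (simp add: distrib_right)
  qed
  have gb: "(\<Sum>k<K. \<bar>\<beta>\<bar>^k) \<le> 1 / (1 - \<bar>\<beta>\<bar>)" for K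
  proof -
    have "(\<Sum>k<K. \<bar>\<beta>\<bar>^k) \<le> (\<Sum>k. \<bar>\<beta>\<bar>^k)"
      by (rule sum_le_suminf) (use b in \<open>auto simp: summable_geometric\<close>)
    also have "\<dots> = 1 / (1 - \<bar>\<beta>\<bar>)" using b by (simp add: suminf_geometric)
    finally show ?thesis .
  qed
  have "SQ x \<and> NN x \<le> NN y / (1 - \<bar>\<beta>\<bar>)"
  proof (rule K2)
    fix F :: "int set" assume F: "finite F"
    have lim: "(\<lambda>K. L2_set (\<lambda>n. norm (xK K n)) F) \<longlonglongrightarrow> L2_set (\<lambda>n. norm (x n)) F"
    proof -
      have "(\<lambda>K. xK K n) \<longlonglongrightarrow> x n" for n
        unfolding xK_def x_def by (rule summable_LIMSEQ[OF sm])
      then show ?thesis unfolding L2_set_def by (intro tendsto_intros)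
    qed
    show "L2_set (\<lambda>n. norm (x n)) F \<le> NN y / (1 - \<bar>\<beta>\<bar>)"
    proof (rule LIMSEQ_le_const2[OF lim], rule exI[of _ 0], intro allI impI)
      fix K :: nat
      have "L2_set (\<lambda>n. norm (xK K n)) F \<le> NN (xK K)" using K1 ind by blast
      also have "\<dots> \<le> (\<Sum>k<K. \<bar>\<beta>\<bar>^k) * NN y" using ind by blast
      also have "\<dots> \<le> (1 / (1 - \<bar>\<beta>\<bar>)) * NN y" by (intro mult_right_mono gb NN_nonneg)
      finally show "L2_set (\<lambda>n. norm (xK K n)) F \<le> NN y / (1 - \<bar>\<beta>\<bar>)" by simp
    qed
  qed
  then show ?thesis using rec by blast
qed

lemma beta_choice:
  fixes r :: real assumes "2 * \<bar>r\<bar> < 1"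
  shows "\<exists>\<beta>. \<bar>\<beta>\<bar> < 1 \<and> r * (1 + \<beta>\<^sup>2) = \<beta>"
proof -
  define w where "w = sqrt (1 - 4 * r\<^sup>2)"
  have r2: "4 * r\<^sup>2 < 1" using abs_square_less_1[of "2*r"] assms by (simp add: power_mult_distrib abs_mult)
  have w0: "0 \<le> w" and w2: "w\<^sup>2 = 1 - 4 * r\<^sup>2" using r2 by (auto simp: w_def)
  define \<beta> where "\<beta> = 2 * r / (1 + w)"
  have bw: "\<beta> * (1 + w) = 2 * r" using w0 by (simp add: \<beta>_def)
  have "\<bar>\<beta>\<bar> = 2 * \<bar>r\<bar> / (1 + w)" using w0 by (simp add: \<beta>_def abs_div abs_mult)
  also have "\<dots> \<le> 2 * \<bar>r\<bar>" using w0 by (simp add: divide_le_eq mult_le_cancel_left1)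
  finally have "\<bar>\<beta>\<bar> \<le> 2 * \<bar>r\<bar>" .
  then have b1: "\<bar>\<beta>\<bar> < 1" using assms by simp
  have "(r * (1 + \<beta>\<^sup>2) - \<beta>) * (1 + w)\<^sup>2 = r * (1+w)\<^sup>2 + r * (\<beta> * (1 + w))\<^sup>2 - (\<beta> * (1 + w)) * (1 + w)"
    by (simp add: algebra_simps power2_eq_square)
  also have "\<dots> = r * (1+w)\<^sup>2 + r * (2 * r)\<^sup>2 - (2 * r) * (1 + w)" unfolding bw ..
  also have "\<dots> = r * (w\<^sup>2 - 1 + 4 * r\<^sup>2)" by (simp add: algebra_simps power2_eq_square)
  also have "\<dots> = 0" using w2 by simp
  finally have "r * (1 + \<beta>\<^sup>2) - \<beta> = 0" using w0 by simp
  then show ?thesis using b1 by auto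
qed

lemma SOLVE_L:
  fixes p q :: real and g :: "int \<Rightarrow> complex"
  assumes pq: "2 * \<bar>q\<bar> < p" and g: "SQ g"
  shows "\<exists>u::int\<Rightarrow>complex. SQ u \<and>
     (\<forall>n. complex_of_real p * u n + complex_of_real q * (u (n - 1) + u (n + 1)) = g n)"
proof -
  have p0: "0 < p" using pq by simp
  have "2 * \<bar>- q / p\<bar> < 1" using pq p0 by (simp add: abs_div divide_less_eq)
  then obtain \<beta> where b1: "\<bar>\<beta>\<bar> < 1" and br: "(- q / p) * (1 + \<beta>\<^sup>2) = \<beta>"
    using beta_choice by blast
  define \<alpha> where "\<alpha> = p / (1 + \<beta>\<^sup>2)"
  have a0: "0 < \<alpha>" using p0 by (simp add: \<alpha>_def add_pos_nonneg)
  have pos: "0 < 1 + \<beta>\<^sup>2" by (simp add: add_pos_nonneg)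
  have ap: "\<alpha> * (1 + \<beta>\<^sup>2) = p" unfolding \<alpha>_def using pos by simp
  have "\<beta> * p = (- q / p) * (1 + \<beta>\<^sup>2) * p" using br by simp
  also have "\<dots> = - q * (1 + \<beta>\<^sup>2)" using p0 by simp
  finally have br2: "- q * (1 + \<beta>\<^sup>2) = \<beta> * p" by simp
  have br3: "- \<beta> * p = q * (1 + \<beta>\<^sup>2)" using br2 by (simp add: algebra_simps)
  have "- \<alpha> * \<beta> = (- \<beta> * p) / (1 + \<beta>\<^sup>2)" unfolding \<alpha>_def by simp
  also have "\<dots> = q" unfolding br3 using pos by simp
  finally have aq: "- \<alpha> * \<beta> = q" .
  have y: "SQ (\<lambda>n. complex_of_real (1 / \<alpha>) * g n)" using NN_scale[OF g] by blast
  obtain w where w: "SQ w" and wr: "\<And>n. w n - complex_of_real \<beta> * w (n - 1) = complex_of_real (1 / \<alpha>) * g n"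
    using GEO[OF b1 y, of 1] by blast
  obtain u where u: "SQ u" and ur: "\<And>n. u n - complex_of_real \<beta> * u (n - (-1)) = w n"
    using GEO[OF b1 w, of "-1"] by blast
  have "complex_of_real p * u n + complex_of_real q * (u (n - 1) + u (n + 1)) = g n" for n
  proof -
    have e1: "w n = u n - \<beta> * u (n + 1)" using ur[of n] by simp
    have e2: "w (n - 1) = u (n - 1) - \<beta> * u n" using ur[of "n - 1"] by simp
    have "g n = \<alpha> * (w n - \<beta> * w (n - 1))" using wr[of n] a0 by simp
    also have "\<dots> = (\<alpha> * (1 + \<beta>\<^sup>2)) * u n + (- \<alpha> * \<beta>) * (u (n - 1) + u (n + 1))"
      unfolding e1 e2 by (simp add: algebra_simps power2_eq_square)
    also have "\<dots> = complex_of_real p * u n + complex_of_real q * (u (n - 1) + u (n + 1))"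
      using ap aq by (metis of_real_minus of_real_mult of_real_add of_real_1 of_real_power)
    finally show ?thesis by simp
  qed
  then show ?thesis using u by blast
qed

lemma Hb_comp:
  fixes f :: "int \<Rightarrow> complex^2"
  shows "Hbulk (ssh_A t) (ssh_V s) f n $ 1 = t * f (n - 1) $ 2 + s * f n $ 2"
    and "Hbulk (ssh_A t) (ssh_V s) f n $ 2 = t * f (n + 1) $ 1 + s * f n $ 1"
  by (simp_all add: Hbulk_def ssh_A_def ssh_V_def sigma1_def adjM_def matrix_vector_mult_def sum_2)

lemma norm_c2: "norm (v::complex^2) = sqrt ((cmod (v$1))\<^sup>2 + (cmod (v$2))\<^sup>2)"
  by (simp add: norm_vec_def L2_set_def sum_2)

lemma compSQ:
  fixes f :: "int \<Rightarrow> complex^2"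
  assumes "SQ (\<lambda>n. f n $ 1)" "SQ (\<lambda>n. f n $ 2)"
  shows "SQ f \<and> NN f \<le> NN (\<lambda>n. f n $ 1) + NN (\<lambda>n. f n $ 2)"
proof (rule K2)
  fix F :: "int set" assume "finite F"
  have "L2_set (\<lambda>n. norm (f n)) F \<le> L2_set (\<lambda>n. cmod (f n $ 1) + cmod (f n $ 2)) F"
    by (rule L2_set_mono) (auto simp: norm_c2 intro: sqrt_sum_squares_le_sum)
  also have "\<dots> \<le> L2_set (\<lambda>n. cmod (f n $ 1)) F + L2_set (\<lambda>n. cmod (f n $ 2)) F"
    by (rule L2_set_triangle_ineq)
  also have "\<dots> \<le> NN (\<lambda>n. f n $ 1) + NN (\<lambda>n. f n $ 2)"
    using K1[OF assms(1)] K1[OF assms(2)] by (intro add_mono) auto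
  finally show "L2_set (\<lambda>n. norm (f n)) F \<le> NN (\<lambda>n. f n $ 1) + NN (\<lambda>n. f n $ 2)" .
qed

lemma compLe:
  fixes f :: "int \<Rightarrow> complex^2"
  assumes "SQ f"
  shows "SQ (\<lambda>n. f n $ i) \<and> NN (\<lambda>n. f n $ i) \<le> NN f"
proof (rule K2)
  fix F :: "int set" assume "finite F"
  have "L2_set (\<lambda>n. norm (f n $ i)) F \<le> L2_set (\<lambda>n. norm (f n)) F"
    by (rule L2_set_mono) (auto simp: Finite_Cartesian_Product.norm_nth_le)
  also have "\<dots> \<le> NN f" by (rule K1[OF assms])
  finally show "L2_set (\<lambda>n. norm (f n $ i)) F \<le> NN f" .
qed

lemma tri3:
  fixes w x y z :: "int \<Rightarrow> complex"
  assumes "SQ x" "SQ y" "SQ z" "\<And>n. w n = x n + y n + z n"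
  shows "NN w \<le> NN x + NN y + NN z"
proof -
  have w: "w = (\<lambda>n. (\<lambda>n. x n + y n) n + z n)" using assms(4) by auto
  have a: "SQ (\<lambda>n. x n + y n) \<and> NN (\<lambda>n. x n + y n) \<le> NN x + NN y" using NN_add assms by blast
  then show ?thesis unfolding w using NN_add[of "\<lambda>n. x n + y n" z] assms(3) by auto
qed

lemma scsh:
  fixes x :: "int \<Rightarrow> complex"
  assumes "SQ x"
  shows "SQ (\<lambda>n. complex_of_real c * x (n - d)) \<and> NN (\<lambda>n. complex_of_real c * x (n - d)) = \<bar>c\<bar> * NN x"
  using NN_scale[of "\<lambda>n. x (n - d)" "complex_of_real c"] NN_shift[of x d] assms by auto

lemma scsh1:
  fixes x :: "int \<Rightarrow> complex"
  assumes "SQ x"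
  shows "SQ (\<lambda>n. complex_of_real c * x (n + 1)) \<and> NN (\<lambda>n. complex_of_real c * x (n + 1)) = \<bar>c\<bar> * NN x"
  using scsh[OF assms, of c "-1"] by simp

lemma scsh0:
  fixes x :: "int \<Rightarrow> complex"
  assumes "SQ x"
  shows "SQ (\<lambda>n. complex_of_real c * x n) \<and> NN (\<lambda>n. complex_of_real c * x n) = \<bar>c\<bar> * NN x"
  using scsh[OF assms, of c 0] by simp


lemma add3SQ:
  fixes x y z :: "int \<Rightarrow> complex"
  assumes "SQ x" "SQ y" "SQ z"
  shows "SQ (\<lambda>n. x n + y n + z n)"
  using NN_add[of x y] NN_add[of "\<lambda>n. x n + y n" z] assms by auto


lemma scshQ:
  fixes x :: "int \<Rightarrow> complex"
  shows "SQ x \<Longrightarrow> SQ (\<lambda>n. complex_of_real c * x (n - d))"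
  using scsh by blast


lemma scshN:
  fixes x :: "int \<Rightarrow> complex"
  shows "SQ x \<Longrightarrow> NN (\<lambda>n. complex_of_real c * x (n - d)) = \<bar>c\<bar> * NN x"
  using scsh by blast

lemma bulk_gap_ssh:
  fixes s t :: real
  assumes st: "\<bar>s\<bar> \<noteq> \<bar>t\<bar>"
  shows "bulk_gap (ssh_A t) (ssh_V s)"
proof -
  define m where "m = \<bar>\<bar>s\<bar> - \<bar>t\<bar>\<bar>"
  have m0: "0 < m" using st by (simp add: m_def)
  show ?thesis unfolding bulk_gap_def
  proof (intro exI[of _ "m/2"] conjI allI impI)
    show "0 < m/2" using m0 by simp
    fix e :: real assume e: "\<bar>e\<bar> < m/2"
    define T where "T = (\<lambda>f n. Hbulk (ssh_A t) (ssh_V s) f n - complex_of_real e *s f n)"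
    have T1: "T f n $ 1 = t * f (n - 1) $ 2 + s * f n $ 2 - e * f n $ 1" for f n
      by (simp add: T_def Hb_comp)
    have T2: "T f n $ 2 = t * f (n + 1) $ 1 + s * f n $ 1 - e * f n $ 2" for f n
      by (simp add: T_def Hb_comp)
    have l2: "f \<in> l2Z \<longleftrightarrow> SQ f" for f by (simp add: l2Z_def sq_summable_def SQ_def)
    have nrm: "l2norm f = NN f" for f by (simp add: l2norm_def NN_def)
    have pres: "SQ (T f)" if f: "SQ f" for f
    proof -
      define a where "a = (\<lambda>n. f n $ 1)"
      define b where "b = (\<lambda>n. f n $ 2)"
      have a: "SQ a" and b: "SQ b" using compLe[OF f] by (auto simp: a_def b_def)
      have e1: "(\<lambda>n. T f n $ 1) = (\<lambda>n. complex_of_real t * b (n - 1) + complex_of_real s * b n + complex_of_real (-e) * a n)"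
        by (auto simp: T1 a_def b_def)
      have e2: "(\<lambda>n. T f n $ 2) = (\<lambda>n. complex_of_real t * a (n + 1) + complex_of_real s * a n + complex_of_real (-e) * b n)"
        by (auto simp: T2 a_def b_def)
      have "SQ (\<lambda>n. T f n $ 1)" unfolding e1
        using add3SQ scsh[OF b] scsh0[OF b] scsh0[OF a] by blast
      moreover have "SQ (\<lambda>n. T f n $ 2)" unfolding e2
        using add3SQ scsh1[OF a] scsh0[OF a] scsh0[OF b] by blast
      ultimately show ?thesis using compSQ by blast
    qed
    have low: "(m - \<bar>e\<bar>) * (NN (\<lambda>n. f n $ 1) + NN (\<lambda>n. f n $ 2)) \<le> NN (\<lambda>n. T f n $ 1) + NN (\<lambda>n. T f n $ 2)"
      if f: "SQ f" for f
    proof -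
      define a where "a = (\<lambda>n. f n $ 1)"
      define b where "b = (\<lambda>n. f n $ 2)"
      define g where "g = (\<lambda>n. T f n $ 1)"
      define h where "h = (\<lambda>n. T f n $ 2)"
      have a: "SQ a" and b: "SQ b" using compLe[OF f] by (auto simp: a_def b_def)
      have g: "SQ g" and h: "SQ h" using compLe[OF pres[OF f]] by (auto simp: g_def h_def)
      have i1: "NN (\<lambda>n. complex_of_real s * b (n - 0)) \<le> NN g + NN (\<lambda>n. complex_of_real e * a (n - 0)) + NN (\<lambda>n. complex_of_real (-t) * b (n - 1))"
        by (rule tri3[OF g scshQ[OF a, of e 0] scshQ[OF b, of "-t" 1]]) (simp add: g_def T1 a_def b_def algebra_simps)
      have i2: "NN (\<lambda>n. complex_of_real t * b (n - 1)) \<le> NN g + NN (\<lambda>n. complex_of_real e * a (n - 0)) + NN (\<lambda>n. complex_of_real (-s) * b (n - 0))"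
        by (rule tri3[OF g scshQ[OF a, of e 0] scshQ[OF b, of "-s" 0]]) (simp add: g_def T1 a_def b_def algebra_simps)
      have i3: "NN (\<lambda>n. complex_of_real s * a (n - 0)) \<le> NN h + NN (\<lambda>n. complex_of_real e * b (n - 0)) + NN (\<lambda>n. complex_of_real (-t) * a (n - (-1)))"
        by (rule tri3[OF h scshQ[OF b, of e 0] scshQ[OF a, of "-t" "-1"]]) (simp add: h_def T2 a_def b_def algebra_simps)
      have i4: "NN (\<lambda>n. complex_of_real t * a (n - (-1))) \<le> NN h + NN (\<lambda>n. complex_of_real e * b (n - 0)) + NN (\<lambda>n. complex_of_real (-s) * a (n - 0))"
        by (rule tri3[OF h scshQ[OF b, of e 0] scshQ[OF a, of "-s" 0]]) (simp add: h_def T2 a_def b_def algebra_simps)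
      have j1: "\<bar>s\<bar> * NN b \<le> NN g + \<bar>e\<bar> * NN a + \<bar>t\<bar> * NN b"
        using i1 scshN[OF a, of e 0] scshN[OF b, of "-t" 1] scshN[OF b, of s 0] by (simp only: abs_minus_cancel; linarith)
      have j2: "\<bar>t\<bar> * NN b \<le> NN g + \<bar>e\<bar> * NN a + \<bar>s\<bar> * NN b"
        using i2 scshN[OF a, of e 0] scshN[OF b, of "-s" 0] scshN[OF b, of t 1] by (simp only: abs_minus_cancel; linarith)
      have j3: "\<bar>s\<bar> * NN a \<le> NN h + \<bar>e\<bar> * NN b + \<bar>t\<bar> * NN a"
        using i3 scshN[OF b, of e 0] scshN[OF a, of "-t" "-1"] scshN[OF a, of s 0] by (simp only: abs_minus_cancel; linarith)
      have j4: "\<bar>t\<bar> * NN a \<le> NN h + \<bar>e\<bar> * NN b + \<bar>s\<bar> * NN a"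
        using i4 scshN[OF b, of e 0] scshN[OF a, of "-s" 0] scshN[OF a, of t "-1"] by (simp only: abs_minus_cancel; linarith)
      have k1: "m * NN b \<le> NN g + \<bar>e\<bar> * NN a"
        using j1 j2 unfolding m_def by (cases "\<bar>t\<bar> \<le> \<bar>s\<bar>") (simp_all add: left_diff_distrib)
      have k2: "m * NN a \<le> NN h + \<bar>e\<bar> * NN b"
        using j3 j4 unfolding m_def by (cases "\<bar>t\<bar> \<le> \<bar>s\<bar>") (simp_all add: left_diff_distrib)
      have "(m - \<bar>e\<bar>) * (NN a + NN b) = m * NN a + m * NN b - \<bar>e\<bar> * NN a - \<bar>e\<bar> * NN b"
        by (simp add: algebra_simps)
      then show ?thesis using k1 k2 unfolding a_def b_def g_def h_def by linarith
    qed
    have me: "0 < m - \<bar>e\<bar>" using e m0 by simp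
    have diffT: "T (\<lambda>n. f1 n - f2 n) n = T f1 n - T f2 n" for f1 f2 n
      by (simp add: vec_eq_iff forall_2 T1 T2 algebra_simps)
    have inj: "inj_on T l2Z"
    proof (rule inj_onI)
      fix f1 f2 assume f1: "f1 \<in> l2Z" and f2: "f2 \<in> l2Z" and eq: "T f1 = T f2"
      define f where "f = (\<lambda>n. f1 n - f2 n)"
      have "SQ (\<lambda>n. - f2 n)" using f2 by (simp add: l2 SQ_def)
      then have f: "SQ f" using NN_add[of f1 "\<lambda>n. - f2 n"] f1 by (simp add: l2 f_def)
      have Tf: "T f n = 0" for n using diffT[of f1 f2 n] eq by (simp add: f_def)
      have z: "NN (\<lambda>n. T f n $ 1) + NN (\<lambda>n. T f n $ 2) \<le> 0"
        using SQ_zero[where 'a=complex] by (simp add: Tf)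
      have "(m - \<bar>e\<bar>) * (NN (\<lambda>n. f n $ 1) + NN (\<lambda>n. f n $ 2)) \<le> 0"
        using low[OF f] z by linarith
      then have "NN (\<lambda>n. f n $ 1) + NN (\<lambda>n. f n $ 2) \<le> 0" using me
        by (simp add: mult_le_0_iff NN_nonneg add_nonneg_nonneg)
      then have "NN (\<lambda>n. f n $ 1) \<le> 0" "NN (\<lambda>n. f n $ 2) \<le> 0"
        using NN_nonneg[of "\<lambda>n. f n $ 1"] NN_nonneg[of "\<lambda>n. f n $ 2"] by linarith+
      then have "f n $ 1 = 0" "f n $ 2 = 0" for n
        using NN_zero_pt compLe[OF f] by blast+
      then have "f n = 0" for n by (simp add: vec_eq_iff forall_2)
      then show "f1 = f2" by (auto simp: f_def fun_eq_iff)
    qed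
    have surj: "\<exists>f'\<in>l2Z. f = T f'" if f: "f \<in> l2Z" for f
    proof -
      have sf: "SQ f" using f l2 by blast
      define g where "g = (\<lambda>n. f n $ 1)"
      define h where "h = (\<lambda>n. f n $ 2)"
      have g: "SQ g" and h: "SQ h" using compLe[OF sf] by (auto simp: g_def h_def)
      define p where "p = s\<^sup>2 + t\<^sup>2 - e\<^sup>2"
      define q where "q = s * t"
      have em: "\<bar>e\<bar> < m" using e m0 by simp
      have "\<bar>e\<bar>\<^sup>2 < m\<^sup>2" by (rule power_strict_mono[OF em]) auto
      then have e2: "e\<^sup>2 < (\<bar>s\<bar> - \<bar>t\<bar>)\<^sup>2" by (simp add: m_def)
      have "(\<bar>s\<bar> - \<bar>t\<bar>)\<^sup>2 = s\<^sup>2 + t\<^sup>2 - 2 * (\<bar>s\<bar> * \<bar>t\<bar>)"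
        by (simp add: power2_diff)
      then have pq: "2 * \<bar>q\<bar> < p" using e2 by (simp add: p_def q_def abs_mult)
      obtain u where u: "SQ u" and ue: "\<And>n. complex_of_real p * u n + complex_of_real q * (u (n - 1) + u (n + 1)) = g n"
        using SOLVE_L[OF pq g] by blast
      obtain v where v: "SQ v" and ve: "\<And>n. complex_of_real p * v n + complex_of_real q * (v (n - 1) + v (n + 1)) = h n"
        using SOLVE_L[OF pq h] by blast
      define a where "a n = complex_of_real e * u n + complex_of_real s * v n + complex_of_real t * v (n - 1)" for n
      define b where "b n = complex_of_real e * v n + complex_of_real s * u n + complex_of_real t * u (n - (-1))" for n
      have sa: "SQ a" using add3SQ[OF scshQ[OF u, of e 0] scshQ[OF v, of s 0] scshQ[OF v, of t 1]]
        by (simp add: a_def[abs_def])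
      have sb: "SQ b" using add3SQ[OF scshQ[OF v, of e 0] scshQ[OF u, of s 0] scshQ[OF u, of t "-1"]]
        by (simp add: b_def[abs_def])
      define f' where "f' n = (vector [a n, b n] :: complex^2)" for n
      have c1: "(\<lambda>n. f' n $ 1) = a" and c2: "(\<lambda>n. f' n $ 2) = b" by (auto simp: f'_def)
      have sf': "SQ f'" using compSQ[of f'] sa sb unfolding c1 c2 by blast
      have "T f' n $ 1 = complex_of_real p * u n + complex_of_real q * (u (n - 1) + u (n + 1))" for n
        by (simp add: T1 f'_def a_def b_def p_def q_def algebra_simps power2_eq_square)
      moreover have "T f' n $ 2 = complex_of_real p * v n + complex_of_real q * (v (n - 1) + v (n + 1))" for n
        by (simp add: T2 f'_def a_def b_def p_def q_def algebra_simps power2_eq_square)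
      ultimately have "T f' n = f n" for n
        using ue ve by (simp add: vec_eq_iff forall_2 g_def h_def)
      then show ?thesis using sf' l2 by (auto intro!: bexI[of _ f'])
    qed
    have bnd: "l2norm f \<le> (2 / (m - \<bar>e\<bar>)) * l2norm (T f)" if f: "f \<in> l2Z" for f
    proof -
      have sf: "SQ f" using f l2 by blast
      have "NN f \<le> NN (\<lambda>n. f n $ 1) + NN (\<lambda>n. f n $ 2)"
        using compSQ compLe[OF sf] by blast
      also have "\<dots> \<le> (NN (\<lambda>n. T f n $ 1) + NN (\<lambda>n. T f n $ 2)) / (m - \<bar>e\<bar>)"
        using low[OF sf] me by (simp add: le_divide_eq mult.commute)
      also have "\<dots> \<le> (2 * NN (T f)) / (m - \<bar>e\<bar>)"
        using compLe[OF pres[OF sf], of 1] compLe[OF pres[OF sf], of 2] me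
        by (intro divide_right_mono) auto
      finally show ?thesis by (simp add: nrm)
    qed
    have "bij_betw T l2Z l2Z"
      unfolding bij_betw_def
    proof
      show "inj_on T l2Z" by (rule inj)
      show "T ` l2Z = l2Z" using pres surj l2 by blast
    qed
    then show "complex_of_real e \<notin> spectrum_l2 (Hbulk (ssh_A t) (ssh_V s))"
      unfolding spectrum_l2_def in_resolvent_l2_def T_def using bnd[unfolded T_def] by blast
  qed
qed

definition geoR :: "real \<Rightarrow> int \<Rightarrow> complex" where
  "geoR r n = (if n \<ge> 1 then complex_of_real (r ^ nat (n - 1)) else 0)"

lemma geoR_le0: "n \<le> 0 \<Longrightarrow> geoR r n = 0" by (simp add: geoR_def)
lemma geoR_1: "geoR r 1 = 1" by (simp add: geoR_def)
lemma geoR_step: "n \<ge> 1 \<Longrightarrow> geoR r (n + 1) = r * geoR r n"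
  by (simp add: geoR_def nat_diff_distrib' power_Suc[symmetric] Suc_nat_eq_nat_zadd1)

lemma SQ_geoR:
  assumes r: "\<bar>r\<bar> < 1" shows "SQ (geoR r)"
proof -
  define w where "w n = (cmod (geoR r n))\<^sup>2" for n
  define h where "h k = int k + 1" for k :: nat
  have wh: "(w \<circ> h) = (\<lambda>k. (r\<^sup>2) ^ k)"
  proof
    fix k
    have "(w \<circ> h) k = (\<bar>r\<bar> ^ k)\<^sup>2" by (simp add: w_def h_def geoR_def norm_power)
    also have "\<dots> = (\<bar>r\<bar>\<^sup>2) ^ k" unfolding power_mult[symmetric] by (simp add: mult.commute)
    also have "\<dots> = (r\<^sup>2) ^ k" by simp
    finally show "(w \<circ> h) k = (r\<^sup>2) ^ k" .
  qed
  have "\<bar>r\<^sup>2\<bar> < 1" using r by (simp add: abs_square_less_1)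
  then have "summable (\<lambda>k. (r\<^sup>2) ^ k)" by (simp add: summable_geometric)
  then have "(w \<circ> h) summable_on UNIV" unfolding wh
    by (subst summable_on_UNIV_nonneg_real_iff) auto
  then have "w summable_on (h ` UNIV)"
    by (subst summable_on_reindex) (auto simp: inj_on_def h_def)
  moreover have "x \<notin> h ` UNIV \<Longrightarrow> w x = 0" for x
  proof -
    assume "x \<notin> h ` UNIV"
    then have "x \<le> 0"
    proof (rule contrapos_np)
      assume "\<not> x \<le> 0"
      then have "x = h (nat (x - 1))" by (simp add: h_def)
      then show "x \<in> h ` UNIV" by blast
    qed
    then show ?thesis by (simp add: w_def geoR_le0)
  qed
  ultimately have "w summable_on UNIV"
    using summable_on_cong_neutral[of UNIV "h ` UNIV" w w] by auto
  then show ?thesis by (simp add: SQ_def w_def[abs_def])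
qed

lemma SQ_refl:
  fixes x :: "int \<Rightarrow> 'a::real_normed_vector"
  shows "SQ (\<lambda>n. x (- n)) = SQ x"
proof -
  have b: "bij_betw (\<lambda>n::int. - n) UNIV UNIV"
    by (rule bij_betwI[where g="\<lambda>n. - n"]) auto
  show ?thesis unfolding SQ_def
    using summable_on_reindex_bij_betw[OF b, of "\<lambda>n. (norm (x n))\<^sup>2"] by simp
qed

lemma ZERO:
  fixes z :: "int \<Rightarrow> complex" and r :: real
  assumes r: "\<bar>r\<bar> < 1" and B: "\<And>n. cmod (z n) \<le> B"
    and st: "\<And>n. P n \<Longrightarrow> P (n + d) \<and> z n = r * z (n + d)" and P: "P n0"
  shows "z n0 = 0"
proof -
  have k: "P (n0 + d * int k) \<and> z n0 = r ^ k * z (n0 + d * int k)" for k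
  proof (induction k)
    case 0 then show ?case using P by simp
  next
    case (Suc k)
    then have "P (n0 + d * int k + d) \<and> z (n0 + d * int k) = r * z (n0 + d * int k + d)"
      using st by blast
    then show ?case using Suc by (simp add: algebra_simps)
  qed
  have bnd: "cmod (z n0) \<le> \<bar>r\<bar> ^ k * B" for k
  proof -
    have "cmod (z n0) = \<bar>r\<bar> ^ k * cmod (z (n0 + d * int k))"
      using k[of k] by (simp add: norm_mult norm_power)
    also have "\<dots> \<le> \<bar>r\<bar> ^ k * B" by (rule mult_left_mono[OF B]) simp
    finally show ?thesis .
  qed
  have "(\<lambda>k. \<bar>r\<bar> ^ k * B) \<longlonglongrightarrow> 0 * B"
    by (intro tendsto_intros LIMSEQ_power_zero) (use r in simp)
  then have "cmod (z n0) \<le> 0"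
    by (intro LIMSEQ_le_const[of "\<lambda>k. \<bar>r\<bar> ^ k * B"]) (use bnd in auto)
  then show ?thesis by simp
qed

lemma HS1:
  "fst (H_SSH s t uL uR (f, c)) n $ 1 =
    (if n = 0 then 0 else if n = 1 then c * uR + s * f 1 $ 2 else t * f (n - 1) $ 2 + s * f n $ 2)"
  by (auto simp: H_SSH_def Hint_def ssh_A_def ssh_V_def sigma1_def adjM_def matrix_vector_mult_def
      sum_2 colmul_def rowmul_def)

lemma HS2:
  "fst (H_SSH s t uL uR (f, c)) n $ 2 =
    (if n = 0 then 0 else if n = -1 then c * uL + s * f (-1) $ 1 else t * f (n + 1) $ 1 + s * f n $ 1)"
  by (auto simp: H_SSH_def Hint_def ssh_A_def ssh_V_def sigma1_def adjM_def matrix_vector_mult_def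
      sum_2 colmul_def rowmul_def)

lemma HS3:
  "snd (H_SSH s t uL uR (f, c)) = uL * f (-1) $ 2 + uR * f 1 $ 1"
  by (auto simp: H_SSH_def Hint_def ssh_A_def ssh_V_def sigma1_def adjM_def matrix_vector_mult_def
      sum_2 colmul_def rowmul_def)

lemma KE:
  "H_SSH s t uL uR (f, c) = ((\<lambda>_. 0), 0) \<longleftrightarrow>
    (\<forall>n. n \<noteq> 0 \<and> n \<noteq> 1 \<longrightarrow> t * f (n - 1) $ 2 + s * f n $ 2 = 0) \<and>
    c * uR + s * f 1 $ 2 = 0 \<and>
    (\<forall>n. n \<noteq> 0 \<and> n \<noteq> -1 \<longrightarrow> t * f (n + 1) $ 1 + s * f n $ 1 = 0) \<and>
    c * uL + s * f (-1) $ 1 = 0 \<and>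
    uL * f (-1) $ 2 + uR * f 1 $ 1 = 0" (is "?L \<longleftrightarrow> ?R")
proof -
  have "?L \<longleftrightarrow> (\<forall>n. fst (H_SSH s t uL uR (f, c)) n $ 1 = 0 \<and> fst (H_SSH s t uL uR (f, c)) n $ 2 = 0)
     \<and> snd (H_SSH s t uL uR (f, c)) = 0"
    by (auto simp: prod_eq_iff fun_eq_iff vec_eq_iff forall_2)
  also have "\<dots> \<longleftrightarrow> ?R"
  proof
    assume L: "(\<forall>n. fst (H_SSH s t uL uR (f, c)) n $ 1 = 0 \<and> fst (H_SSH s t uL uR (f, c)) n $ 2 = 0)
     \<and> snd (H_SSH s t uL uR (f, c)) = 0"
    have a: "fst (H_SSH s t uL uR (f, c)) n $ 1 = 0" "fst (H_SSH s t uL uR (f, c)) n $ 2 = 0" for n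
      using L by auto
    show ?R
    proof (intro conjI allI impI)
      fix n :: int assume "n \<noteq> 0 \<and> n \<noteq> 1" then show "t * f (n - 1) $ 2 + s * f n $ 2 = 0"
        using a(1)[of n] by (simp add: HS1)
    next
      show "c * uR + s * f 1 $ 2 = 0" using a(1)[of 1] by (simp add: HS1)
    next
      fix n :: int assume "n \<noteq> 0 \<and> n \<noteq> -1" then show "t * f (n + 1) $ 1 + s * f n $ 1 = 0"
        using a(2)[of n] by (simp add: HS2)
    next
      show "c * uL + s * f (-1) $ 1 = 0" using a(2)[of "-1"] by (simp add: HS2)
    next
      show "uL * f (-1) $ 2 + uR * f 1 $ 1 = 0" using L by (simp add: HS3)
    qed
  next
    assume R: ?R
    have "fst (H_SSH s t uL uR (f, c)) n $ 1 = 0" for n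
      using R[THEN conjunct1, rule_format, of n] R by (auto simp: HS1)
    moreover have "fst (H_SSH s t uL uR (f, c)) n $ 2 = 0" for n
      using R[THEN conjunct2, THEN conjunct2, THEN conjunct1, rule_format, of n] R by (auto simp: HS2)
    moreover have "snd (H_SSH s t uL uR (f, c)) = 0" using R by (simp add: HS3)
    ultimately show "(\<forall>n. fst (H_SSH s t uL uR (f, c)) n $ 1 = 0 \<and> fst (H_SSH s t uL uR (f, c)) n $ 2 = 0)
     \<and> snd (H_SSH s t uL uR (f, c)) = 0" by blast
  qed
  finally show ?thesis .
qed

interpretation VS: vector_space scaleI
  by unfold_locales (auto simp: scaleI_def prod_eq_iff fun_eq_iff vec_eq_iff algebra_simps)

lemma cdim_VS: "cdimI S = VS.dim S" by (simp add: cdimI_def)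

lemma kerI_iff: "(f, c) \<in> kerI (H_SSH s t uL uR) \<longleftrightarrow> f 0 = 0 \<and> SQ f \<and> H_SSH s t uL uR (f, c) = ((\<lambda>_. 0), 0)"
  by (simp add: kerI_def intSpace_def sq_summable_def SQ_def)

lemma H_add: "H_SSH s t uL uR (x + y) = H_SSH s t uL uR x + H_SSH s t uL uR y"
proof -
  obtain f c g d where x: "x = (f, c)" and y: "y = (g, d)" by (cases x, cases y) auto
  have xy: "x + y = ((\<lambda>n. f n + g n), c + d)" by (simp add: x y fun_eq_iff)
  show ?thesis unfolding xy unfolding x y
    by (auto simp: prod_eq_iff fun_eq_iff vec_eq_iff forall_2 HS1 HS2 HS3 algebra_simps)
qed

lemma H_scale: "H_SSH s t uL uR (scaleI a x) = scaleI a (H_SSH s t uL uR x)"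
proof -
  obtain f c where x: "x = (f, c)" by (cases x) auto
  have sx: "scaleI a x = ((\<lambda>n. a *s f n), a * c)" by (simp add: x scaleI_def)
  show ?thesis unfolding sx unfolding x
    by (auto simp: prod_eq_iff fun_eq_iff vec_eq_iff forall_2 HS1 HS2 HS3 algebra_simps scaleI_def)
qed

lemma SQ_vscale:
  fixes f :: "int \<Rightarrow> complex^2"
  assumes "SQ f" shows "SQ (\<lambda>n. a *s f n)"
proof -
  have "SQ (\<lambda>n. a * f n $ i)" for i using NN_scale compLe[OF assms] by blast
  then show ?thesis using compSQ[of "\<lambda>n. a *s f n"] by simp
qed

lemma ker_subspace: "VS.subspace (kerI (H_SSH s t uL uR))"
  unfolding VS.subspace_def
proof (intro conjI ballI allI)
  have "(0::istate) = ((\<lambda>_. 0), 0)" by (simp add: zero_prod_def zero_fun_def)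
  moreover have "((\<lambda>_. 0), 0) \<in> kerI (H_SSH s t uL uR)"
    unfolding kerI_iff using SQ_zero[where 'a="complex^2"] by (simp add: KE)
  ultimately show "0 \<in> kerI (H_SSH s t uL uR)" by simp
next
  fix x y assume x: "x \<in> kerI (H_SSH s t uL uR)" and y: "y \<in> kerI (H_SSH s t uL uR)"
  obtain f c g d where xe: "x = (f, c)" and ye: "y = (g, d)" by (cases x, cases y) auto
  have xy: "x + y = ((\<lambda>n. f n + g n), c + d)" by (simp add: xe ye fun_eq_iff)
  have "SQ (\<lambda>n. f n + g n)" using NN_add[of f g] x y by (simp add: xe ye kerI_iff)
  moreover have "H_SSH s t uL uR (x + y) = ((\<lambda>_. 0), 0)"
    using x y unfolding H_add by (simp add: kerI_def fun_eq_iff)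
  ultimately show "x + y \<in> kerI (H_SSH s t uL uR)"
    using x y unfolding xy by (simp add: kerI_iff xe ye)
next
  fix a x assume x: "x \<in> kerI (H_SSH s t uL uR)"
  obtain f c where xe: "x = (f, c)" by (cases x) auto
  have sx: "scaleI a x = ((\<lambda>n. a *s f n), a * c)" by (simp add: xe scaleI_def)
  have "SQ (\<lambda>n. a *s f n)" using SQ_vscale x by (simp add: xe kerI_iff)
  moreover have "H_SSH s t uL uR (scaleI a x) = ((\<lambda>_. 0), 0)"
    using x unfolding H_scale by (simp add: kerI_def scaleI_def)
  ultimately show "scaleI a x \<in> kerI (H_SSH s t uL uR)"
    using x unfolding sx by (simp add: kerI_iff xe)
qed

lemma solve_lin:
  fixes a b :: complex and s t :: real
  assumes "s \<noteq> 0" "complex_of_real t * a + complex_of_real s * b = 0"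
  shows "b = complex_of_real (- t / s) * a"
proof -
  have "complex_of_real s * b = - (complex_of_real t * a)" using assms(2) by (simp add: eq_neg_iff_add_eq_0 add.commute)
  then show ?thesis using assms(1) by (simp add: field_simps)
qed

lemma solve_lin2:
  fixes c b :: complex and s u :: real
  assumes "s \<noteq> 0" "c * complex_of_real u + complex_of_real s * b = 0"
  shows "b = c * complex_of_real (- (u / s))"
proof -
  have "complex_of_real s * b = - (c * complex_of_real u)" using assms(2) by (simp add: eq_neg_iff_add_eq_0 add.commute)
  then show ?thesis using assms(1) by (simp add: field_simps)
qed

lemma gstep2: "n \<ge> 2 \<Longrightarrow> geoR r n = r * geoR r (n - 1)"
  using geoR_step[of "n - 1" r] by simp

lemma cbound: "SQ f \<Longrightarrow> cmod (f n $ i) \<le> NN (f :: int \<Rightarrow> complex^2)"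
  using pt_le[of f n] Finite_Cartesian_Product.norm_nth_le[of "f n" i] by linarith

lemma dim_single:
  assumes "kerI H = VS.span {\<phi>}" "\<phi> \<noteq> 0"
  shows "cdimI (kerI H) = 1"
proof -
  have "VS.independent {\<phi>}" using assms(2) VS.independent_insert[of \<phi> "{}"] by auto
  then show ?thesis unfolding cdim_VS assms(1) using VS.dim_span_eq_card_independent by simp
qed

lemma caseA:
  fixes s t uL uR :: real
  assumes st: "\<bar>t\<bar> < \<bar>s\<bar>"
  shows "cdimI (kerI (H_SSH s t uL uR)) = 1"
proof -
  have s0: "s \<noteq> 0" using st by auto
  define r where "r = - t / s"
  have r1: "\<bar>r\<bar> < 1" using st s0 by (simp add: r_def abs_div divide_less_eq)
  have srr: "t + s * r = 0" using s0 by (simp add: r_def)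
  have sr: "complex_of_real t + complex_of_real s * complex_of_real r = 0"
    by (metis srr of_real_add of_real_mult of_real_0)
  define kL where "kL = complex_of_real (- (uL / s))"
  define kR where "kR = complex_of_real (- (uR / s))"
  define \<phi>f where "\<phi>f n = (vector [kL * geoR r (- n), kR * geoR r n] :: complex^2)" for n
  define \<phi> where "\<phi> = (\<phi>f, 1::complex)"
  have p1: "\<phi>f n $ 1 = kL * geoR r (- n)" and p2: "\<phi>f n $ 2 = kR * geoR r n" for n
    by (simp_all add: \<phi>f_def)
  have \<phi>0: "\<phi>f 0 = 0" by (simp add: vec_eq_iff forall_2 p1 p2 geoR_le0)
  have sqg: "SQ (geoR r)" by (rule SQ_geoR[OF r1])
  have sqgm: "SQ (\<lambda>n. geoR r (- n))" using sqg SQ_refl[of "geoR r"] by simp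
  have "SQ \<phi>f"
    using compSQ[of \<phi>f] NN_scale[OF sqg, of kR] NN_scale[OF sqgm, of kL] by (simp add: p1 p2)
  moreover have "H_SSH s t uL uR (\<phi>f, 1) = ((\<lambda>_. 0), 0)"
    unfolding KE
  proof (intro conjI allI impI)
    fix n :: int assume n: "n \<noteq> 0 \<and> n \<noteq> 1"
    show "t * \<phi>f (n - 1) $ 2 + s * \<phi>f n $ 2 = 0"
    proof (cases "n \<ge> 2")
      case True
      have "t * \<phi>f (n - 1) $ 2 + s * \<phi>f n $ 2 = (kR * geoR r (n - 1)) * (t + s * r)"
        unfolding p2 gstep2[OF True] by (simp add: algebra_simps)
      then show ?thesis using sr by simp
    next
      case False
      then have "n \<le> -1" using n by auto
      then show ?thesis by (simp add: p2 geoR_le0)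
    qed
  next
    show "(1::complex) * uR + s * \<phi>f 1 $ 2 = 0" using s0 by (simp add: p2 geoR_1 kR_def)
  next
    fix n :: int assume n: "n \<noteq> 0 \<and> n \<noteq> -1"
    show "t * \<phi>f (n + 1) $ 1 + s * \<phi>f n $ 1 = 0"
    proof (cases "n \<le> -2")
      case True
      have e: "geoR r (- n) = r * geoR r (- (n + 1))" using gstep2[of "- n" r] True by simp
      have "t * \<phi>f (n + 1) $ 1 + s * \<phi>f n $ 1 = (kL * geoR r (- (n + 1))) * (t + s * r)"
        unfolding p1 e by (simp add: algebra_simps)
      then show ?thesis using sr by simp
    next
      case False
      then have "n \<ge> 1" using n by auto
      then show ?thesis by (simp add: p1 geoR_le0)
    qed
  next
    show "(1::complex) * uL + s * \<phi>f (- 1) $ 1 = 0" using s0 by (simp add: p1 geoR_1 kL_def)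
  next
    show "uL * \<phi>f (- 1) $ 2 + uR * \<phi>f 1 $ 1 = 0" by (simp add: p1 p2 geoR_le0)
  qed
  ultimately have \<phi>ker: "\<phi> \<in> kerI (H_SSH s t uL uR)" unfolding \<phi>_def kerI_iff using \<phi>0 by simp
  have sub: "VS.span {\<phi>} \<subseteq> kerI (H_SSH s t uL uR)"
    using VS.span_minimal[OF _ ker_subspace] \<phi>ker by blast
  have sup: "x \<in> VS.span {\<phi>}" if x: "x \<in> kerI (H_SSH s t uL uR)" for x
  proof -
    obtain f c where xe: "x = (f, c)" by (cases x) auto
    have f0: "f 0 = 0" and sf: "SQ f" and K: "H_SSH s t uL uR (f, c) = ((\<lambda>_. 0), 0)"
      using x by (simp_all add: xe kerI_iff)
    note E = K[unfolded KE]
    have E1: "\<And>n. n \<noteq> 0 \<Longrightarrow> n \<noteq> 1 \<Longrightarrow> t * f (n - 1) $ 2 + s * f n $ 2 = 0" using E by blast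
    have E2: "c * uR + s * f 1 $ 2 = 0" using E by blast
    have E3: "\<And>n. n \<noteq> 0 \<Longrightarrow> n \<noteq> -1 \<Longrightarrow> t * f (n + 1) $ 1 + s * f n $ 1 = 0" using E by blast
    have E4: "c * uL + s * f (- 1) $ 1 = 0" using E by blast
    have a: "f n $ 1 = 0" if "n \<ge> 1" for n
    proof (rule ZERO[OF r1, of "\<lambda>n. f n $ 1" "NN f" "\<lambda>n. n \<ge> 1" 1])
      show "cmod (f m $ 1) \<le> NN f" for m using cbound[OF sf] .
      show "m \<ge> 1 \<Longrightarrow> m + 1 \<ge> 1 \<and> f m $ 1 = complex_of_real r * f (m + 1) $ 1" for m
        using solve_lin[OF s0 E3[of m]] by (simp add: r_def)
    qed (rule that)
    have b: "f n $ 2 = 0" if "n \<le> -1" for n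
    proof (rule ZERO[OF r1, of "\<lambda>n. f n $ 2" "NN f" "\<lambda>n. n \<le> -1" "-1"])
      show "cmod (f m $ 2) \<le> NN f" for m using cbound[OF sf] .
      show "m \<le> -1 \<Longrightarrow> m + -1 \<le> -1 \<and> f m $ 2 = complex_of_real r * f (m + -1) $ 2" for m
        using solve_lin[OF s0 E1[of m]] by (simp add: r_def)
    qed (rule that)
    have c2: "f n $ 2 = c * (kR * geoR r n)" if "n \<ge> 1" for n
      using that
    proof (induction n rule: int_ge_induct)
      case base
      then show ?case using solve_lin2[OF s0 E2] by (simp add: geoR_1 kR_def)
    next
      case (step n)
      have "f (n + 1) $ 2 = complex_of_real r * f n $ 2"
        using solve_lin[OF s0 E1[of "n + 1"]] step(1) by (simp add: r_def)
      then show ?case using step geoR_step[OF step(1), of r] by simp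
    qed
    have c1: "f (- m) $ 1 = c * (kL * geoR r m)" if "m \<ge> 1" for m
      using that
    proof (induction m rule: int_ge_induct)
      case base
      then show ?case using solve_lin2[OF s0 E4] by (simp add: geoR_1 kL_def)
    next
      case (step m)
      have "f (- (m + 1)) $ 1 = complex_of_real r * f (- m) $ 1"
        using solve_lin[OF s0 E3[of "- (m + 1)"]] step(1) by (simp add: r_def)
      then show ?case using step geoR_step[OF step(1), of r] by simp
    qed
    have "f n = c *s \<phi>f n" for n
    proof (cases "n \<ge> 1")
      case True
      then show ?thesis using a[OF True] c2[OF True]
        by (simp add: vec_eq_iff forall_2 p1 p2 geoR_le0)
    next
      case False
      show ?thesis
      proof (cases "n = 0")
        case True then show ?thesis using f0 \<phi>0 by simp
      next
        case False
        then have n1: "n \<le> -1" using \<open>\<not> n \<ge> 1\<close> by auto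
        then show ?thesis using b[OF n1] c1[of "- n"]
          by (simp add: vec_eq_iff forall_2 p1 p2 geoR_le0)
      qed
    qed
    then have "x = scaleI c \<phi>" by (simp add: xe \<phi>_def scaleI_def fun_eq_iff)
    then show ?thesis using VS.span_singleton by auto
  qed
  have "kerI (H_SSH s t uL uR) = VS.span {\<phi>}" using sub sup by blast
  moreover have "\<phi> \<noteq> 0" by (simp add: \<phi>_def zero_prod_def)
  ultimately show ?thesis by (rule dim_single)
qed

definition Psi :: "real \<Rightarrow> complex \<Rightarrow> complex \<Rightarrow> complex \<Rightarrow> istate" where
  "Psi r a b g = ((\<lambda>n. vector [a * geoR r n, b * geoR r (- n)]), g)"

lemma Psi1: "fst (Psi r a b g) n $ 1 = a * geoR r n" by (simp add: Psi_def)
lemma Psi2: "fst (Psi r a b g) n $ 2 = b * geoR r (- n)" by (simp add: Psi_def)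
lemma Psi3: "snd (Psi r a b g) = g" by (simp add: Psi_def)

lemma Psi_scale: "scaleI k (Psi r a b g) = Psi r (k * a) (k * b) (k * g)"
  by (simp add: Psi_def scaleI_def fun_eq_iff vec_eq_iff forall_2)

lemma Psi_decomp: "Psi r a b g = scaleI a (Psi r 1 0 0) + scaleI b (Psi r 0 1 0) + scaleI g (Psi r 0 0 1)"
  by (simp add: Psi_def scaleI_def fun_eq_iff vec_eq_iff forall_2)

lemma sub_coord: "VS.subspace {y. fst y k $ i = 0}"
  unfolding VS.subspace_def by (auto simp: scaleI_def zero_prod_def)

lemma PsiKer:
  fixes s t uL uR :: real and a b g :: complex
  assumes t0: "t \<noteq> 0" and rdef: "r = - s / t" and r1: "\<bar>r\<bar> < 1"
    and c1: "g * uR = 0" and c2: "g * uL = 0" and c3: "uL * b + uR * a = 0"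
  shows "Psi r a b g \<in> kerI (H_SSH s t uL uR)"
proof -
  have trr: "s + t * r = 0" using t0 by (simp add: rdef)
  have tr: "complex_of_real s + complex_of_real t * complex_of_real r = 0"
    by (metis trr of_real_add of_real_mult of_real_0)
  define f where "f = fst (Psi r a b g)"
  have Pe: "Psi r a b g = (f, g)" by (simp add: f_def Psi_def)
  have p1: "f n $ 1 = a * geoR r n" and p2: "f n $ 2 = b * geoR r (- n)" for n
    by (simp_all add: f_def Psi1 Psi2)
  have f0: "f 0 = 0" by (simp add: vec_eq_iff forall_2 p1 p2 geoR_le0)
  have sqg: "SQ (geoR r)" by (rule SQ_geoR[OF r1])
  have sqgm: "SQ (\<lambda>n. geoR r (- n))" using sqg SQ_refl[of "geoR r"] by simp
  have "SQ f"
    using compSQ[of f] NN_scale[OF sqg, of a] NN_scale[OF sqgm, of b] by (simp add: p1 p2)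
  moreover have "H_SSH s t uL uR (f, g) = ((\<lambda>_. 0), 0)"
    unfolding KE
  proof (intro conjI allI impI)
    fix n :: int assume n: "n \<noteq> 0 \<and> n \<noteq> 1"
    show "t * f (n - 1) $ 2 + s * f n $ 2 = 0"
    proof (cases "n \<le> -1")
      case True
      have e: "geoR r (- (n - 1)) = r * geoR r (- n)" using geoR_step[of "- n" r] True by simp
      have "t * f (n - 1) $ 2 + s * f n $ 2 = (b * geoR r (- n)) * (s + t * r)"
        unfolding p2 e by (simp add: algebra_simps)
      then show ?thesis using tr by simp
    next
      case False
      then have "n \<ge> 2" using n by auto
      then show ?thesis by (simp add: p2 geoR_le0)
    qed
  next
    show "g * uR + s * f 1 $ 2 = 0" using c1 by (simp add: p2 geoR_le0)
  next
    fix n :: int assume n: "n \<noteq> 0 \<and> n \<noteq> -1"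
    show "t * f (n + 1) $ 1 + s * f n $ 1 = 0"
    proof (cases "n \<ge> 1")
      case True
      have "t * f (n + 1) $ 1 + s * f n $ 1 = (a * geoR r n) * (s + t * r)"
        unfolding p1 geoR_step[OF True] by (simp add: algebra_simps)
      then show ?thesis using tr by simp
    next
      case False
      then have "n \<le> -2" using n by auto
      then show ?thesis by (simp add: p1 geoR_le0)
    qed
  next
    show "g * uL + s * f (- 1) $ 1 = 0" using c2 by (simp add: p1 geoR_le0)
  next
    show "uL * f (- 1) $ 2 + uR * f 1 $ 1 = 0" using c3 by (simp add: p1 p2 geoR_1)
  qed
  ultimately show ?thesis unfolding Pe kerI_iff using f0 by simp
qed

lemma kerB:
  fixes s t uL uR :: real and x :: istate
  assumes t0: "t \<noteq> 0" and rdef: "r = - s / t" and r1: "\<bar>r\<bar> < 1"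
    and x: "x \<in> kerI (H_SSH s t uL uR)"
  shows "\<exists>(a::complex) (b::complex) (g::complex). x = Psi r a b g \<and> g * uR = 0 \<and> g * uL = 0 \<and> uL * b + uR * a = 0"
proof -
  obtain f c where xe: "x = (f, c)" by (cases x) auto
  have f0: "f 0 = 0" and sf: "SQ f" and K: "H_SSH s t uL uR (f, c) = ((\<lambda>_. 0), 0)"
    using x by (simp_all add: xe kerI_iff)
  note E = K[unfolded KE]
  have E1: "\<And>n. n \<noteq> 0 \<Longrightarrow> n \<noteq> 1 \<Longrightarrow> t * f (n - 1) $ 2 + s * f n $ 2 = 0" using E by blast
  have E2: "c * uR + s * f 1 $ 2 = 0" using E by blast
  have E3: "\<And>n. n \<noteq> 0 \<Longrightarrow> n \<noteq> -1 \<Longrightarrow> t * f (n + 1) $ 1 + s * f n $ 1 = 0" using E by blast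
  have E4: "c * uL + s * f (- 1) $ 1 = 0" using E by blast
  have E5: "uL * f (- 1) $ 2 + uR * f 1 $ 1 = 0" using E by blast
  have sl: "a' = complex_of_real r * b'" if "complex_of_real t * a' + complex_of_real s * b' = 0" for a' b'
    using solve_lin[OF t0, of s b' a'] that by (simp add: rdef add.commute)
  have sl2: "b' = complex_of_real r * a'" if "complex_of_real t * b' + complex_of_real s * a' = 0" for a' b'
    using solve_lin[OF t0, of s a' b'] that by (simp add: rdef add.commute)
  have zb: "f n $ 2 = 0" if "n \<ge> 1" for n
  proof (rule ZERO[OF r1, of "\<lambda>n. f n $ 2" "NN f" "\<lambda>n. n \<ge> 1" 1])
    show "cmod (f m $ 2) \<le> NN f" for m using cbound[OF sf] .
    show "m \<ge> 1 \<Longrightarrow> m + 1 \<ge> 1 \<and> f m $ 2 = complex_of_real r * f (m + 1) $ 2" for m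
      using sl[OF E1[of "m + 1"]] by simp
  qed (rule that)
  have za: "f n $ 1 = 0" if "n \<le> -1" for n
  proof (rule ZERO[OF r1, of "\<lambda>n. f n $ 1" "NN f" "\<lambda>n. n \<le> -1" "-1"])
    show "cmod (f m $ 1) \<le> NN f" for m using cbound[OF sf] .
    show "m \<le> -1 \<Longrightarrow> m + -1 \<le> -1 \<and> f m $ 1 = complex_of_real r * f (m + -1) $ 1" for m
      using sl[OF E3[of "m - 1"]] by simp
  qed (rule that)
  have ca: "f n $ 1 = f 1 $ 1 * geoR r n" if "n \<ge> 1" for n
    using that
  proof (induction n rule: int_ge_induct)
    case base then show ?case by (simp add: geoR_1)
  next
    case (step n)
    have "f (n + 1) $ 1 = complex_of_real r * f n $ 1"
      using sl2[OF E3[of n]] step(1) by simp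
    then show ?case using step geoR_step[OF step(1), of r] by simp
  qed
  have cb: "f (- m) $ 2 = f (- 1) $ 2 * geoR r m" if "m \<ge> 1" for m
    using that
  proof (induction m rule: int_ge_induct)
    case base then show ?case by (simp add: geoR_1)
  next
    case (step m)
    have e: "- (m + 1) = - m - 1" by simp
    have "f (- (m + 1)) $ 2 = complex_of_real r * f (- m) $ 2"
      unfolding e using sl2[OF E1[of "- m"]] step(1) by simp
    then show ?case using step geoR_step[OF step(1), of r] by simp
  qed
  obtain A B where A: "A = f 1 $ 1" and B: "B = f (- 1) $ 2" by blast
  have fe: "f n = fst (Psi r A B c) n" for n
  proof (cases "n \<ge> 1")
    case True
    then show ?thesis using ca[OF True] zb[OF True] A
      by (simp add: vec_eq_iff forall_2 Psi1 Psi2 geoR_le0)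
  next
    case False
    show ?thesis
    proof (cases "n = 0")
      case True then show ?thesis using f0 by (simp add: vec_eq_iff forall_2 Psi1 Psi2 geoR_le0)
    next
      case False
      then have n1: "n \<le> -1" using \<open>\<not> n \<ge> 1\<close> by auto
      then show ?thesis using za[OF n1] cb[of "- n"] B
        by (simp add: vec_eq_iff forall_2 Psi1 Psi2 geoR_le0)
    qed
  qed
  have xP: "x = Psi r A B c"
  proof -
    have "f = fst (Psi r A B c)" using fe by (rule ext)
    then show ?thesis by (simp add: xe Psi_def)
  qed
  have g1: "c * uR = 0" using E2 zb[of 1] by simp
  have g2: "c * uL = 0" using E4 za[of "-1"] by simp
  have g3: "uL * B + uR * A = 0" using E5 A B by simp
  show ?thesis using xP g1 g2 g3 by blast
qed

lemma caseB:
  fixes s t uL uR :: real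
  assumes st: "\<bar>s\<bar> < \<bar>t\<bar>"
  shows "cdimI (kerI (H_SSH s t uL uR)) = 1 \<or> cdimI (kerI (H_SSH s t uL uR)) = 3"
proof -
  have t0: "t \<noteq> 0" using st by auto
  define r where "r = - s / t"
  have r1: "\<bar>r\<bar> < 1" using st t0 by (simp add: r_def abs_div divide_less_eq)
  note PK = PsiKer[OF t0 r_def r1] and KB = kerB[OF t0 r_def r1]
  show ?thesis
  proof (cases "uL = 0 \<and> uR = 0")
    case True
    define B where "B = {Psi r 1 0 0, Psi r 0 1 0, Psi r 0 0 1}"
    have inK: "B \<subseteq> kerI (H_SSH s t uL uR)" unfolding B_def using PK True by auto
    have sub: "VS.span B \<subseteq> kerI (H_SSH s t uL uR)" by (rule VS.span_minimal[OF inK ker_subspace])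
    have sup: "kerI (H_SSH s t uL uR) \<subseteq> VS.span B"
    proof
      fix x assume "x \<in> kerI (H_SSH s t uL uR)"
      then obtain a b g :: complex where x: "x = Psi r a b g" using KB by blast
      have "Psi r 1 0 0 \<in> VS.span B" "Psi r 0 1 0 \<in> VS.span B" "Psi r 0 0 1 \<in> VS.span B"
        by (auto simp: B_def intro: VS.span_base)
      moreover have "x = scaleI a (Psi r 1 0 0) + scaleI b (Psi r 0 1 0) + scaleI g (Psi r 0 0 1)"
        unfolding x by (rule Psi_decomp)
      ultimately show "x \<in> VS.span B"
        by (simp only:) (intro VS.span_add VS.span_scale)
    qed
    have n1: "Psi r 1 0 0 \<notin> VS.span {Psi r 0 1 0, Psi r 0 0 1}"
    proof -
      have "VS.span {Psi r 0 1 0, Psi r 0 0 1} \<subseteq> {y. fst y 1 $ 1 = 0}"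
        by (rule VS.span_minimal[OF _ sub_coord]) (auto simp: Psi1)
      moreover have "fst (Psi r 1 0 0) 1 $ 1 \<noteq> 0" by (simp add: Psi1 geoR_1)
      ultimately show ?thesis by blast
    qed
    have n2: "Psi r 0 1 0 \<notin> VS.span {Psi r 0 0 1}"
    proof -
      have "VS.span {Psi r 0 0 1} \<subseteq> {y. fst y (- 1) $ 2 = 0}"
        by (rule VS.span_minimal[OF _ sub_coord]) (auto simp: Psi2)
      moreover have "fst (Psi r 0 1 0) (- 1) $ 2 \<noteq> 0" by (simp add: Psi2 geoR_1)
      ultimately show ?thesis by blast
    qed
    have n3: "Psi r 0 0 1 \<notin> VS.span {}" by (simp add: Psi_def zero_prod_def)
    have d1: "Psi r 1 0 0 \<notin> {Psi r 0 1 0, Psi r 0 0 1}" using n1 VS.span_base[of "Psi r 1 0 0" "{Psi r 0 1 0, Psi r 0 0 1}"] by blast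
    have d2: "Psi r 0 1 0 \<notin> {Psi r 0 0 1}" using n2 VS.span_base[of "Psi r 0 1 0" "{Psi r 0 0 1}"] by blast
    have ind: "VS.independent B"
      unfolding B_def using n1 n2 n3 d1 d2
      by (simp add: VS.independent_insert)
    have card: "card B = 3" unfolding B_def using d1 d2 by simp
    have "kerI (H_SSH s t uL uR) = VS.span B" using sub sup by blast
    then have "cdimI (kerI (H_SSH s t uL uR)) = 3"
      unfolding cdim_VS using VS.dim_span_eq_card_independent[OF ind] card by simp
    then show ?thesis by simp
  next
    case False
    define \<phi> where "\<phi> = Psi r uL (- uR) 0"
    have \<phi>K: "\<phi> \<in> kerI (H_SSH s t uL uR)" unfolding \<phi>_def by (rule PK) (simp_all add: algebra_simps)
    have \<phi>0: "\<phi> \<noteq> 0"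
    proof
      assume z: "\<phi> = 0"
      have "fst \<phi> 1 $ 1 = 0" "fst \<phi> (- 1) $ 2 = 0" by (simp_all add: z zero_prod_def)
      then have "uL = 0" "uR = 0" by (simp_all add: \<phi>_def Psi1 Psi2 geoR_1)
      then show False using False by simp
    qed
    have sub: "VS.span {\<phi>} \<subseteq> kerI (H_SSH s t uL uR)" using VS.span_minimal[OF _ ker_subspace] \<phi>K by blast
    have sup: "x \<in> VS.span {\<phi>}" if x: "x \<in> kerI (H_SSH s t uL uR)" for x
    proof -
      obtain a b g :: complex where xe: "x = Psi r a b g" and g1: "g * uR = 0" and g2: "g * uL = 0"
        and e: "uL * b + uR * a = 0" using KB[OF x] by blast
      have g0: "g = 0" using g1 g2 False by auto
      obtain k :: complex where k: "a = k * uL" "b = k * (- uR)"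
      proof (cases "uL = 0")
        case True
        then have u: "uR \<noteq> 0" using False by simp
        have "a = 0" using e True u by simp
        then show ?thesis using that[of "- b / uR"] True u by (simp add: field_simps)
      next
        case False
        have "b = - (uR * a) / uL" using e False by (simp add: field_simps eq_neg_iff_add_eq_0 add.commute)
        then show ?thesis using that[of "a / uL"] False by (simp add: field_simps)
      qed
      have "x = scaleI k \<phi>" unfolding xe \<phi>_def Psi_scale using k g0 by simp
      then show ?thesis using VS.span_singleton by auto
    qed
    have "kerI (H_SSH s t uL uR) = VS.span {\<phi>}" using sub sup by blast
    then have "cdimI (kerI (H_SSH s t uL uR)) = 1" using \<phi>0 by (rule dim_single)
    then show ?thesis by simp
  qed
qed

theorem mainTheorem8:
  fixes s t uL uR :: real
  assumes "\<bar>s\<bar> \<noteq> \<bar>t\<bar>"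
  shows "bulk_gap (ssh_A t) (ssh_V s) \<and> odd (cdimI (kerI (H_SSH s t uL uR)))"
proof
  show "bulk_gap (ssh_A t) (ssh_V s)" using bulk_gap_ssh[OF assms] .
  show "odd (cdimI (kerI (H_SSH s t uL uR)))"
  proof (cases "\<bar>t\<bar> < \<bar>s\<bar>")
    case True then show ?thesis using caseA[OF True] by simp
  next
    case False
    then have "\<bar>s\<bar> < \<bar>t\<bar>" using assms by simp
    then have "cdimI (kerI (H_SSH s t uL uR)) = 1 \<or> cdimI (kerI (H_SSH s t uL uR)) = 3"
      by (rule caseB)
    then show ?thesis by auto
  qed
qed

end
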